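(* There exist absolute constants $c_1,c_2>0$ such that for all sufficiently large $n$ and all $\varepsilon\in(0,1]$ the following holds. Let $p$ be a distribution on $[n]$ with $d_{\mathrm{TV}}(p,\mathcal{U}_n) = \varepsilon$ and let $z=(p-\mathcal{U}_n)/\varepsilon$. Let the random set $S$ be generated as follows: choose $j$ uniformly at random from $\{1,\dots,\lfloor 2\log n\rfloor\}$, set $r=2^j$, and include each $i\in[n]$ in $S$ independently with probability $1/r$. Then with probability at least $c_1/\log n$, there exists $i\in S$ such that $$\left|\frac{\mathcal{U}_n(i) + \varepsilon z(i)}{\mathcal{U}_n(S) + \varepsilon z(S)} - \frac{\mathcal{U}_n(i)}{\mathcal{U}_n(S)}\right| \;=\; \left|p_S(i)-\frac{1}{|S|}\right| \;\geq\; c_2\,\varepsilon .$$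
   Context: $\mathcal{U}_n$ is the uniform distribution on $[n]$. For a vector $x\in\mathbb{R}^n$ and $S\subseteq[n]$, $x(S)=\sum_{i\in S}x(i)$; $p_S(i)=p(i)/p(S)$. Total variation distance: $d_{\mathrm{TV}}(p,q)=\frac12\sum_{i}|p(i)-q(i)|$. $\log$ is base 2. *)

theory Defs
  imports Complex_Main
begin

definition is_dist :: "nat \<Rightarrow> (nat \<Rightarrow> real) \<Rightarrow> bool" where
  "is_dist n p \<longleftrightarrow> (\<forall>i\<in>{1..n}. 0 \<le> p i) \<and> (\<Sum>i\<in>{1..n}. p i) = 1"

definition unif :: "nat \<Rightarrow> nat \<Rightarrow> real" where
  "unif n i = (if i \<in> {1..n} then 1 / real n else 0)"

definition dTV :: "nat \<Rightarrow> (nat \<Rightarrow> real) \<Rightarrow> (nat \<Rightarrow> real) \<Rightarrow> real" where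
  "dTV n p q = (1/2) * (\<Sum>i\<in>{1..n}. \<bar>p i - q i\<bar>)"

definition mass :: "(nat \<Rightarrow> real) \<Rightarrow> nat set \<Rightarrow> real" where
  "mass x S = (\<Sum>i\<in>S. x i)"

definition cond :: "(nat \<Rightarrow> real) \<Rightarrow> nat set \<Rightarrow> nat \<Rightarrow> real" where
  "cond p S i = p i / mass p S"

definition rand_set_prob :: "nat \<Rightarrow> (nat set \<Rightarrow> bool) \<Rightarrow> real" where
  "rand_set_prob n E =
     (let J = nat \<lfloor>2 * log 2 (real n)\<rfloor> in
      (1 / real J) * (\<Sum>j\<in>{1..J}.
         (let q = 1 / (2::real) ^ j in
          \<Sum>S\<in>{S. S \<subseteq> {1..n} \<and> E S}. q ^ card S * (1 - q) ^ (n - card S))))"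

end

theory Submission
  imports Defs
begin


definition W :: "real \<Rightarrow> nat set \<Rightarrow> nat set \<Rightarrow> real" where
  "W q A T = q ^ card T * (1 - q) ^ (card A - card T)"

definition Ex :: "real \<Rightarrow> nat set \<Rightarrow> (nat set \<Rightarrow> real) \<Rightarrow> real" where
  "Ex q A f = (\<Sum>T\<in>Pow A. W q A T * f T)"

abbreviation Pr :: "real \<Rightarrow> nat set \<Rightarrow> (nat set \<Rightarrow> bool) \<Rightarrow> real" where
  "Pr q A P \<equiv> Ex q A (\<lambda>T. of_bool (P T))"

lemma W_nonneg: "0 \<le> q \<Longrightarrow> q \<le> 1 \<Longrightarrow> 0 \<le> W q A T"
  unfolding W_def by simp

lemma Ex_cong: "(\<And>T. T \<subseteq> A \<Longrightarrow> f T = g T) \<Longrightarrow> Ex q A f = Ex q A g"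
  unfolding Ex_def by (rule sum.cong) auto

lemma Ex_mono: "0 \<le> q \<Longrightarrow> q \<le> 1 \<Longrightarrow> (\<And>T. T \<subseteq> A \<Longrightarrow> f T \<le> g T) \<Longrightarrow> Ex q A f \<le> Ex q A g"
  unfolding Ex_def by (rule sum_mono) (auto intro!: mult_left_mono W_nonneg)

lemma Ex_add: "Ex q A (\<lambda>T. f T + g T) = Ex q A f + Ex q A g"
  unfolding Ex_def by (simp add: distrib_left sum.distrib)

lemma Ex_diff: "Ex q A (\<lambda>T. f T - g T) = Ex q A f - Ex q A g"
  unfolding Ex_def by (simp add: right_diff_distrib sum_subtractf)

lemma Ex_cmult: "Ex q A (\<lambda>T. c * f T) = c * Ex q A f"
  unfolding Ex_def sum_distrib_left by (intro sum.cong) (simp_all add: mult.left_commute)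

lemma Ex_sum: "finite I \<Longrightarrow> Ex q A (\<lambda>T. \<Sum>i\<in>I. f i T) = (\<Sum>i\<in>I. Ex q A (f i))"
  unfolding Ex_def sum_distrib_left by (rule sum.swap)

lemma Ex_nonneg: "0 \<le> q \<Longrightarrow> q \<le> 1 \<Longrightarrow> (\<And>T. T \<subseteq> A \<Longrightarrow> 0 \<le> f T) \<Longrightarrow> 0 \<le> Ex q A f"
  unfolding Ex_def by (rule sum_nonneg) (auto intro!: mult_nonneg_nonneg W_nonneg)

lemma Ex_split:
  assumes "finite A" "x \<notin> A"
  shows "Ex q (insert x A) f = q * Ex q A (\<lambda>T. f (insert x T)) + (1 - q) * Ex q A f"
proof -
  have fin: "finite (Pow A)" using assms by simp
  have disj: "Pow A \<inter> insert x ` Pow A = {}" using assms by auto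
  have inj: "inj_on (insert x) (Pow A)" unfolding inj_on_def by (metis Diff_insert_absorb PowD assms(2) subset_iff)
  have W1: "W q (insert x A) (insert x T) = q * W q A T" if "T \<subseteq> A" for T
  proof -
    have "finite T" using that assms finite_subset by blast
    moreover have "x \<notin> T" using that assms by blast
    moreover have "card T \<le> card A" using that assms card_mono by blast
    ultimately show ?thesis using assms unfolding W_def by (simp add: Suc_diff_le)
  qed
  have W2: "W q (insert x A) T = (1 - q) * W q A T" if "T \<subseteq> A" for T
  proof -
    have "card T \<le> card A" using that assms card_mono by blast
    then show ?thesis using assms unfolding W_def by (simp add: Suc_diff_le)
  qed
  have "Ex q (insert x A) f = (\<Sum>T\<in>Pow A. W q (insert x A) T * f T)
      + (\<Sum>T\<in>insert x ` Pow A. W q (insert x A) T * f T)"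
    unfolding Ex_def Pow_insert using fin disj by (simp add: sum.union_disjoint)
  also have "(\<Sum>T\<in>insert x ` Pow A. W q (insert x A) T * f T)
      = (\<Sum>T\<in>Pow A. W q (insert x A) (insert x T) * f (insert x T))"
    using inj by (simp add: sum.reindex)
  also have "\<dots> = q * Ex q A (\<lambda>T. f (insert x T))"
    unfolding Ex_def sum_distrib_left by (rule sum.cong) (auto simp: W1)
  also have "(\<Sum>T\<in>Pow A. W q (insert x A) T * f T) = (1 - q) * Ex q A f"
    unfolding Ex_def sum_distrib_left by (rule sum.cong) (auto simp: W2)
  finally show ?thesis by simp
qed

lemma Ex_const: "finite A \<Longrightarrow> Ex q A (\<lambda>_. c) = c"
proof (induction A rule: finite_induct)
  case empty then show ?case by (simp add: Ex_def W_def)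
next
  case (insert x A) then show ?case by (simp add: Ex_split algebra_simps)
qed

lemma Ex_sum_elems: "finite A \<Longrightarrow> Ex q A (\<lambda>T. \<Sum>l\<in>T. g l) = q * (\<Sum>l\<in>A. g l)"
proof (induction A rule: finite_induct)
  case empty then show ?case by (simp add: Ex_def W_def)
next
  case (insert x A)
  have "Ex q A (\<lambda>T. \<Sum>l\<in>insert x T. g l) = Ex q A (\<lambda>T. g x + (\<Sum>l\<in>T. g l))"
    using insert by (intro Ex_cong) (auto simp: finite_subset sum.insert_if)
  also have "\<dots> = g x + q * (\<Sum>l\<in>A. g l)" using insert by (simp add: Ex_add Ex_const)
  finally show ?case using insert by (simp add: Ex_split algebra_simps)
qed

lemma Ex_card: "finite A \<Longrightarrow> Ex q A (\<lambda>T. real (card T)) = q * real (card A)"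
proof -
  have "Ex q A (\<lambda>T. real (card T)) = Ex q A (\<lambda>T. \<Sum>l\<in>T. 1)" by (rule Ex_cong) simp
  moreover assume "finite A"
  ultimately show ?thesis using Ex_sum_elems[of A q "\<lambda>_. 1"] by simp
qed

lemma Ex_pick:
  assumes "finite A" "x \<in> A"
  shows "Ex q A (\<lambda>T. of_bool (x \<in> T) * f T) = q * Ex q (A - {x}) (\<lambda>T. f (insert x T))"
proof -
  have A: "A = insert x (A - {x})" using assms by auto
  have "Ex q A (\<lambda>T. of_bool (x \<in> T) * f T) = q * Ex q (A - {x}) (\<lambda>T. f (insert x T))
     + (1 - q) * Ex q (A - {x}) (\<lambda>T. of_bool (x \<in> T) * f T)"
    by (subst A, subst Ex_split) (use assms in auto)
  moreover have "Ex q (A - {x}) (\<lambda>T. of_bool (x \<in> T) * f T) = Ex q (A - {x}) (\<lambda>T. 0)"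
    by (rule Ex_cong) auto
  ultimately show ?thesis using assms by (simp add: Ex_const)
qed

lemma Pr_elem: "finite A \<Longrightarrow> l \<in> A \<Longrightarrow> Pr q A (\<lambda>T. l \<in> T) = q"
  using Ex_pick[of A l q "\<lambda>_. 1"] by (simp add: Ex_const)

lemma Pr_pair: "finite A \<Longrightarrow> i \<in> A \<Longrightarrow> l \<in> A \<Longrightarrow> i \<noteq> l \<Longrightarrow> Pr q A (\<lambda>T. i \<in> T \<and> l \<in> T) = q^2"
proof -
  assume a: "finite A" "i \<in> A" "l \<in> A" "i \<noteq> l"
  have "Pr q A (\<lambda>T. i \<in> T \<and> l \<in> T) = Ex q A (\<lambda>T. of_bool (i \<in> T) * of_bool (l \<in> T))"
    by (rule Ex_cong) auto
  also have "\<dots> = q * Pr q (A - {i}) (\<lambda>T. l \<in> insert i T)"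
    by (rule Ex_pick[OF a(1) a(2), of q "\<lambda>T. of_bool (l \<in> T)"])
  also have "Pr q (A - {i}) (\<lambda>T. l \<in> insert i T) = Pr q (A - {i}) (\<lambda>T. l \<in> T)"
    using a(4) by (intro Ex_cong) simp
  also have "\<dots> = q" using a by (intro Pr_elem) auto
  finally show ?thesis by (simp add: power2_eq_square)
qed

lemma Pr_empty: "finite A \<Longrightarrow> Pr q A (\<lambda>T. T = {}) = (1 - q) ^ card A"
proof -
  assume "finite A"
  have "Pr q A (\<lambda>T. T = {}) = (\<Sum>T\<in>Pow A. if T = {} then W q A T else 0)"
    unfolding Ex_def by (rule sum.cong) auto
  also have "\<dots> = W q A {}" using \<open>finite A\<close> by (simp add: sum.delta')
  finally show ?thesis by (simp add: W_def)
qed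

lemma Pr_eq: "finite A \<Longrightarrow> T0 \<subseteq> A \<Longrightarrow> Pr q A (\<lambda>T. T = T0) = W q A T0"
proof -
  assume "finite A" "T0 \<subseteq> A"
  have "Pr q A (\<lambda>T. T = T0) = (\<Sum>T\<in>Pow A. if T = T0 then W q A T else 0)"
    unfolding Ex_def by (rule sum.cong) auto
  also have "\<dots> = W q A T0" using \<open>finite A\<close> \<open>T0 \<subseteq> A\<close> by (simp add: sum.delta')
  finally show ?thesis .
qed

lemma Markov:
  assumes "0 \<le> q" "q \<le> 1" "t > 0" "\<And>T. T \<subseteq> A \<Longrightarrow> 0 \<le> f T"
  shows "Pr q A (\<lambda>T. f T > t) \<le> Ex q A f / t"
proof -
  have "Pr q A (\<lambda>T. f T > t) \<le> Ex q A (\<lambda>T. (1/t) * f T)"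
    using assms by (intro Ex_mono) (auto simp: field_simps)
  also have "\<dots> = Ex q A f / t" using Ex_cmult[of q A "1/t" f] by simp
  finally show ?thesis .
qed

lemma rsp_eq: "rand_set_prob n E =
  (let J = nat \<lfloor>2 * log 2 (real n)\<rfloor> in (1 / real J) * (\<Sum>j\<in>{1..J}. Pr (1 / 2 ^ j) {1..n} E))"
proof -
  have "(\<Sum>S\<in>{S. S \<subseteq> {1..n} \<and> E S}. q ^ card S * (1 - q) ^ (n - card S)) = Pr q {1..n} E" for q :: real
  proof -
    have "{S. S \<subseteq> {1..n} \<and> E S} = {S\<in>Pow {1..n}. E S}" by auto
    then have "(\<Sum>S\<in>{S. S \<subseteq> {1..n} \<and> E S}. q ^ card S * (1 - q) ^ (n - card S))
       = (\<Sum>S\<in>Pow {1..n}. if E S then q ^ card S * (1 - q) ^ (n - card S) else 0)"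
      by (simp only:) (rule sum.inter_filter, simp)
    then show ?thesis unfolding Ex_def W_def
      by (simp add: of_bool_def if_distrib cong: if_cong)
  qed
  then show ?thesis unfolding rand_set_prob_def by simp
qed



lemma core:
  fixes s a R \<epsilon> k :: real
  assumes s2: "s \<ge> 2" and sk: "s \<le> 16*k+1" and k1: "k \<ge> 1" and R: "\<bar>R\<bar> \<le> 64*\<epsilon>*k"
    and a1: "a \<ge> -1" and ak: "128*\<epsilon>*k \<le> \<bar>a\<bar>" and e0: "0 < \<epsilon>" and e1: "\<epsilon> \<le> 1"
  shows "s + a + R > 0 \<and> \<bar>(1+a)/(s+a+R) - 1/s\<bar> \<ge> \<epsilon>/12"
proof -
  define X where "X = s + a + R"
  have Ra: "\<bar>R\<bar> \<le> \<bar>a\<bar>/2" using R ak by linarith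
  have X: "X > 0"
  proof (cases "a \<ge> 0")
    case True then show ?thesis using Ra s2 unfolding X_def by linarith
  next
    case False then have "\<bar>a\<bar> \<le> 1" using a1 by linarith
    then show ?thesis using Ra s2 a1 unfolding X_def by linarith
  qed
  have Xle: "X \<le> s + 2*\<bar>a\<bar>" using Ra unfolding X_def by linarith
  have num: "\<bar>(s-1)*a - R\<bar> \<ge> s*\<bar>a\<bar>/4"
  proof -
    have "\<bar>(s-1)*a\<bar> = (s-1)*\<bar>a\<bar>" using s2 by (simp add: abs_mult)
    moreover have "((s-1) - 1/2) * \<bar>a\<bar> \<ge> (s/4) * \<bar>a\<bar>"
      using s2 by (intro mult_right_mono) auto
    moreover have "((s-1) - 1/2) * \<bar>a\<bar> = (s-1)*\<bar>a\<bar> - \<bar>a\<bar>/2" by (simp add: algebra_simps)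
    moreover have "\<bar>(s-1)*a\<bar> - \<bar>R\<bar> \<le> \<bar>(s-1)*a - R\<bar>" by (rule abs_triangle_ineq2)
    ultimately show ?thesis using Ra by linarith
  qed
  have s0: "s \<noteq> 0" using s2 by simp
  have eq: "(1+a)/X - 1/s = ((s-1)*a - R)/(s*X)"
  proof -
    have "(1+a)/X - 1/s = ((1+a)*s - X)/(X*s)" using X s0 by (simp add: diff_frac_eq)
    also have "(1+a)*s - X = (s-1)*a - R" unfolding X_def by (simp add: algebra_simps)
    finally show ?thesis by (simp add: mult.commute)
  qed
  have pos: "s*X > 0" using X s2 by simp
  have "(\<bar>a\<bar>/4)/(s + 2*\<bar>a\<bar>) \<le> (\<bar>a\<bar>/4)/X"
    using X Xle by (intro divide_left_mono) auto
  also have "(\<bar>a\<bar>/4)/X = (s*\<bar>a\<bar>/4)/(s*X)" using s0 by simp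
  also have "\<dots> \<le> \<bar>(s-1)*a - R\<bar>/(s*X)"
    using num pos by (intro divide_right_mono) auto
  also have "\<dots> = \<bar>(1+a)/X - 1/s\<bar>"
    unfolding eq using pos by (simp add: abs_divide)
  finally have main: "\<bar>(1+a)/X - 1/s\<bar> \<ge> (\<bar>a\<bar>/4)/(s + 2*\<bar>a\<bar>)" .
  have fin: "(\<bar>a\<bar>/4)/(s + 2*\<bar>a\<bar>) \<ge> \<epsilon>/12"
  proof (cases "\<bar>a\<bar> \<ge> s")
    case True
    have "(\<bar>a\<bar>/4)/(s + 2*\<bar>a\<bar>) \<ge> (\<bar>a\<bar>/4)/(3*\<bar>a\<bar>)"
      using True s2 by (intro divide_left_mono) auto
    moreover have "(\<bar>a\<bar>/4)/(3*\<bar>a\<bar>) = 1/12" using True s2 by simp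
    ultimately show ?thesis using e1 by linarith
  next
    case False
    have "(\<bar>a\<bar>/4)/(s + 2*\<bar>a\<bar>) \<ge> (\<bar>a\<bar>/4)/(3*s)"
      using False s2 by (intro divide_left_mono) auto
    moreover have "(\<bar>a\<bar>/4)/(3*s) \<ge> (128*\<epsilon>*k/4)/(3*(17*k))"
      using ak sk k1 s2 e0 by (intro frac_le) auto
    moreover have "(128*\<epsilon>*k/4)/(3*(17*k)) = (32/51)*\<epsilon>" using k1 by simp
    ultimately show ?thesis using e0 by linarith
  qed
  show ?thesis using X main fin unfolding X_def by linarith
qed



definition devA :: "nat \<Rightarrow> (nat \<Rightarrow> real) \<Rightarrow> real \<Rightarrow> nat set \<Rightarrow> nat \<Rightarrow> real" where
  "devA n p \<epsilon> S i = \<bar>(unif n i + \<epsilon> * ((p i - unif n i) / \<epsilon>)) / (mass (unif n) S + \<epsilon> * mass (\<lambda>i. (p i - unif n i) / \<epsilon>) S) - unif n i / mass (unif n) S\<bar>"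

definition devB :: "(nat \<Rightarrow> real) \<Rightarrow> nat set \<Rightarrow> nat \<Rightarrow> real" where
  "devB p S i = \<bar>cond p S i - 1 / real (card S)\<bar>"

definition Ev :: "nat \<Rightarrow> (nat \<Rightarrow> real) \<Rightarrow> real \<Rightarrow> real \<Rightarrow> nat set \<Rightarrow> bool" where
  "Ev n p \<epsilon> c S = (mass p S > 0 \<and> (\<exists>i\<in>S. devA n p \<epsilon> S i \<ge> c \<and> devB p S i \<ge> c))"

lemma mass_z: "(e::real) \<noteq> 0 \<Longrightarrow> mass (unif n) S + e * mass (\<lambda>i. (p i - unif n i) / e) S = mass p S"
proof -
  assume e: "e \<noteq> 0"
  have "e * mass (\<lambda>i. (p i - unif n i) / e) S = (\<Sum>l\<in>S. e * ((p l - unif n l) / e))"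
    unfolding mass_def by (simp add: sum_distrib_left)
  also have "\<dots> = (\<Sum>l\<in>S. p l - unif n l)" using e by simp
  also have "\<dots> = mass p S - mass (unif n) S" unfolding mass_def by (rule sum_subtractf)
  finally show ?thesis by simp
qed

lemma Ev_intro:
  assumes S: "S \<subseteq> {1..n}" and i: "i \<in> S" and e: "\<epsilon> \<noteq> 0"
    and m: "mass p S > 0" and c: "\<bar>cond p S i - 1 / real (card S)\<bar> \<ge> c"
  shows "Ev n p \<epsilon> c S"
proof -
  have fin: "finite S" using S finite_subset by blast
  have n: "n \<ge> 1" using S i by auto
  have cS: "card S \<ge> 1" using fin i by (metis One_nat_def Suc_leI card_gt_0_iff empty_iff)
  have u: "\<And>l. l \<in> S \<Longrightarrow> unif n l = 1 / real n" using S by (auto simp: unif_def)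
  have z1: "unif n i + \<epsilon> * ((p i - unif n i) / \<epsilon>) = p i" using e by simp
  have mu: "mass (unif n) S = real (card S) / real n" unfolding mass_def using u by simp
  have mz: "mass (unif n) S + \<epsilon> * mass (\<lambda>i. (p i - unif n i) / \<epsilon>) S = mass p S"
    using mass_z[OF e] .
  have u2: "unif n i / mass (unif n) S = 1 / real (card S)" using u[OF i] mu n cS by simp
  have eq: "devA n p \<epsilon> S i = devB p S i" unfolding devA_def devB_def z1 mz u2 cond_def ..
  show ?thesis unfolding Ev_def
    by (intro conjI m bexI[of _ i]) (use eq c i in \<open>auto simp: devB_def\<close>)
qed

lemma Ev_mono: "Ev n p \<epsilon> c S \<Longrightarrow> c' \<le> c \<Longrightarrow> Ev n p \<epsilon> c' S"
  unfolding Ev_def by (meson order_trans)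



lemma divdiv: "(c::real) \<noteq> 0 \<Longrightarrow> (x/c)/(y/c) = x/y"
  by (cases "y = 0") (simp_all add: field_simps)

lemma Det1:
  fixes p :: "nat \<Rightarrow> real"
  assumes n: "n \<ge> 1" and S: "S \<subseteq> {1..n}" and i: "i \<in> S"
    and pn: "\<forall>l\<in>{1..n}. 0 \<le> p l"
    and T: "S - {i} \<noteq> {}" "real (card (S - {i})) \<le> 16*k"
       "(\<Sum>l\<in>S - {i}. \<bar>real n * p l - 1\<bar>) \<le> 64*\<epsilon>*k"
    and ei: "128*\<epsilon>*k \<le> \<bar>real n * p i - 1\<bar>" and k1: "k \<ge> 1" and e0: "0 < \<epsilon>" and e1: "\<epsilon> \<le> 1"
  shows "Ev n p \<epsilon> (\<epsilon>/12) S"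
proof -
  define e where "e = (\<lambda>l. real n * p l - 1)"
  define T where "T = S - {i}"
  define R where "R = (\<Sum>l\<in>T. e l)"
  define s where "s = real (card S)"
  have fin: "finite S" using S finite_subset by blast
  have finT: "finite T" using fin T_def by simp
  have Sins: "S = insert i T" "i \<notin> T" using i T_def by auto
  have cs: "card S = Suc (card T)" using Sins finT by simp
  have s2: "s \<ge> 2" using T(1) finT cs unfolding s_def T_def by (simp add: card_gt_0_iff Suc_le_eq)
  have sk: "s \<le> 16*k+1" using T(2) cs unfolding s_def T_def by simp
  have R0: "\<bar>R\<bar> \<le> (\<Sum>l\<in>T. \<bar>e l\<bar>)" unfolding R_def by (rule sum_abs)
  have R1: "(\<Sum>l\<in>T. \<bar>e l\<bar>) \<le> 64*\<epsilon>*k" using T(3) unfolding T_def e_def .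
  have R: "\<bar>R\<bar> \<le> 64*\<epsilon>*k" using R0 R1 by linarith
  have a1: "e i \<ge> -1" using pn i S n unfolding e_def by auto
  have ei': "128*\<epsilon>*k \<le> \<bar>e i\<bar>" using ei unfolding e_def .
  note c = core[OF s2 sk k1 R a1 ei' e0 e1]
  have pl: "p l = (1 + e l) / real n" for l using n unfolding e_def by (simp add: field_simps)
  have mT: "(\<Sum>l\<in>T. p l) = (real (card T) + R) / real n"
    unfolding pl R_def by (simp add: sum_divide_distrib[symmetric] sum.distrib)
  have mS: "mass p S = (s + e i + R) / real n"
    unfolding mass_def s_def using Sins finT cs mT pl[of i] n by (simp add: field_simps)
  have mpos: "mass p S > 0" using mS c n by simp
  have "cond p S i = ((1 + e i)/real n) / ((s + e i + R)/real n)"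
    unfolding cond_def mS using pl[of i] by simp
  also have "\<dots> = (1 + e i) / (s + e i + R)" using n by (intro divdiv) simp
  finally have "cond p S i = (1 + e i) / (s + e i + R)" .
  then have "\<bar>cond p S i - 1 / real (card S)\<bar> \<ge> \<epsilon>/12" using c s_def by simp
  then show ?thesis using Ev_intro[OF S i _ mpos] e0 by simp
qed

lemma powbound:
  fixes q :: real
  assumes q: "0 < q" "q \<le> 1/2" and m: "q * real m \<ge> 31"
  shows "(1 - q) ^ m \<le> 1/32"
proof -
  have b: "1 + real m * q \<le> (1 + q) ^ m" using Bernoulli_inequality[of q m] q by simp
  have "(1 - q) ^ m * (1 + q) ^ m = (1 - q^2) ^ m" by (simp add: power_mult_distrib[symmetric] algebra_simps power2_eq_square)
  also have "\<dots> \<le> 1" using q by (intro power_le_one) (auto simp: power2_eq_square mult_le_one)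
  finally have p1: "(1 - q) ^ m * (1 + q) ^ m \<le> 1" .
  have "(1 + q) ^ m \<ge> 32" using b m by (simp add: mult.commute)
  moreover have "(1 - q) ^ m \<ge> 0" using q by simp
  ultimately have "(1 - q) ^ m * 32 \<le> (1 - q) ^ m * (1 + q) ^ m" by (intro mult_left_mono) auto
  then show ?thesis using p1 by linarith
qed

lemma tame_prob:
  fixes p :: "nat \<Rightarrow> real"
  assumes n: "n \<ge> 1" and tot: "(\<Sum>l\<in>{1..n}. \<bar>real n * p l - 1\<bar>) = 2*\<epsilon>*n"
    and e0: "0 < \<epsilon>" and q: "0 < q" "q \<le> 1/2" and k: "k = q * real n" "k \<ge> 32"
    and i: "i \<in> {1..n}"
  shows "Pr q ({1..n} - {i}) (\<lambda>T. T \<noteq> {} \<and> real (card T) \<le> 16*k \<and> (\<Sum>l\<in>T. \<bar>real n * p l - 1\<bar>) \<le> 64*\<epsilon>*k) \<ge> 7/8"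
proof -
  define A where "A = {1..n} - {i}"
  define f where "f = (\<lambda>T. (\<Sum>l\<in>T. \<bar>real n * p l - 1\<bar>))"
  have finA: "finite A" unfolding A_def by simp
  have cA: "card A = n - 1" unfolding A_def using i by simp
  have q1: "0 \<le> q" "q \<le> 1" using q by auto
  have pw: "\<And>T. (of_bool (T \<noteq> {} \<and> real (card T) \<le> 16*k \<and> f T \<le> 64*\<epsilon>*k) :: real) \<ge>
      1 - of_bool (T = {}) - of_bool (real (card T) > 16*k) - of_bool (f T > 64*\<epsilon>*k)"
    by (auto simp: not_le)
  have "Pr q A (\<lambda>T. T \<noteq> {} \<and> real (card T) \<le> 16*k \<and> f T \<le> 64*\<epsilon>*k) \<ge>
      Ex q A (\<lambda>T. 1 - of_bool (T = {}) - of_bool (real (card T) > 16*k) - of_bool (f T > 64*\<epsilon>*k))"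
    using q1 pw by (intro Ex_mono) auto
  also have "Ex q A (\<lambda>T. 1 - of_bool (T = {}) - of_bool (real (card T) > 16*k) - of_bool (f T > 64*\<epsilon>*k))
     = 1 - Pr q A (\<lambda>T. T = {}) - Pr q A (\<lambda>T. real (card T) > 16*k) - Pr q A (\<lambda>T. f T > 64*\<epsilon>*k)"
    by (simp only: Ex_diff Ex_const finA)
  finally have main: "Pr q A (\<lambda>T. T \<noteq> {} \<and> real (card T) \<le> 16*k \<and> f T \<le> 64*\<epsilon>*k) \<ge>
     1 - Pr q A (\<lambda>T. T = {}) - Pr q A (\<lambda>T. real (card T) > 16*k) - Pr q A (\<lambda>T. f T > 64*\<epsilon>*k)" .
  have qn1: "q * real (n - 1) = k - q" using n k by (simp add: of_nat_diff algebra_simps)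
  have P1: "Pr q A (\<lambda>T. T = {}) \<le> 1/32"
  proof -
    have "q * real (n - 1) \<ge> 31" using qn1 q k by linarith
    then show ?thesis unfolding Pr_empty[OF finA] cA by (rule powbound[OF q(1) q(2)])
  qed
  have "Pr q A (\<lambda>T. real (card T) > 16*k) \<le> Ex q A (\<lambda>T. real (card T)) / (16*k)"
    using q1 k by (intro Markov) auto
  also have "\<dots> = (k - q) / (16*k)" unfolding Ex_card[OF finA] cA qn1 ..
  also have "\<dots> \<le> k / (16*k)" using q k by (intro divide_right_mono) auto
  also have "\<dots> = 1/16" using k(2) by simp
  finally have P2: "Pr q A (\<lambda>T. real (card T) > 16*k) \<le> 1/16" .
  have fA: "(\<Sum>l\<in>A. \<bar>real n * p l - 1\<bar>) \<le> 2*\<epsilon>*n"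
    unfolding tot[symmetric] A_def by (intro sum_mono2) auto
  have "Pr q A (\<lambda>T. f T > 64*\<epsilon>*k) \<le> Ex q A f / (64*\<epsilon>*k)"
    using q1 k e0 unfolding f_def by (intro Markov) (auto intro: sum_nonneg)
  also have "Ex q A f = q * (\<Sum>l\<in>A. \<bar>real n * p l - 1\<bar>)" unfolding f_def by (rule Ex_sum_elems[OF finA])
  also have "q * (\<Sum>l\<in>A. \<bar>real n * p l - 1\<bar>) / (64*\<epsilon>*k) \<le> q * (2*\<epsilon>*n) / (64*\<epsilon>*k)"
    using fA q e0 k by (intro divide_right_mono mult_left_mono) auto
  also have "q * (2*\<epsilon>*n) / (64*\<epsilon>*k) = 1/32" using e0 k(2) n q(1) unfolding k(1) by (simp add: field_simps)
  finally have P3: "Pr q A (\<lambda>T. f T > 64*\<epsilon>*k) \<le> 1/32" .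
  show ?thesis using main P1 P2 P3 unfolding A_def f_def by linarith
qed

lemma Mech:
  fixes p :: "nat \<Rightarrow> real"
  assumes n: "n \<ge> 1" and pn: "\<forall>l\<in>{1..n}. 0 \<le> p l"
    and tot: "(\<Sum>l\<in>{1..n}. \<bar>real n * p l - 1\<bar>) = 2*\<epsilon>*n"
    and e0: "0 < \<epsilon>" and e1: "\<epsilon> \<le> 1" and q: "0 < q" "q \<le> 1/2" and k: "k = q * real n" "k \<ge> 32"
    and G: "G \<subseteq> {1..n}" and Gbig: "\<forall>i\<in>G. 128*\<epsilon>*k \<le> \<bar>real n * p i - 1\<bar>"
    and qG: "q * real (card G) \<le> 1/2"
  shows "Pr q {1..n} (Ev n p \<epsilon> (\<epsilon>/12)) \<ge> 3/8 * q * real (card G)"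
proof -
  define A where "A = {1..n}"
  define tame where "tame = (\<lambda>T. T \<noteq> {} \<and> real (card T) \<le> 16*k \<and> (\<Sum>l\<in>T. \<bar>real n * p l - 1\<bar>) \<le> 64*\<epsilon>*k)"
  define B where "B = (\<lambda>i S. i \<in> S \<and> tame (S - {i}) \<and> (\<forall>l\<in>G-{i}. l \<notin> S))"
  have finA: "finite A" unfolding A_def by simp
  have finG: "finite G" using G finite_subset by blast
  have q1: "0 \<le> q" "q \<le> 1" using q by auto
  have k1: "k \<ge> 1" using k by simp
  have BEv: "Ev n p \<epsilon> (\<epsilon>/12) S" if S: "S \<subseteq> A" and iG: "i \<in> G" and b: "B i S" for i S
  proof -
    have t: "tame (S - {i})" "i \<in> S" using b unfolding B_def by auto
    show ?thesis
      by (rule Det1[OF n S[unfolded A_def] t(2) pn _ _ _ _ k1 e0 e1])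
        (use t Gbig iG in \<open>auto simp: tame_def\<close>)
  qed
  have pw1: "(of_bool (Ev n p \<epsilon> (\<epsilon>/12) S) :: real) \<ge> (\<Sum>i\<in>G. of_bool (B i S))" if S: "S \<subseteq> A" for S
  proof -
    have eq: "(\<Sum>i\<in>G. (of_bool (B i S) :: real)) = real (card (G \<inter> {i. B i S}))"
      using finG by simp
    have le1: "card (G \<inter> {i. B i S}) \<le> Suc 0"
      using finG by (subst card_le_Suc0_iff_eq) (auto simp: B_def)
    show ?thesis
    proof (cases "G \<inter> {i. B i S} = {}")
      case True then show ?thesis using eq by simp
    next
      case False
      then obtain i where "i \<in> G" "B i S" by auto
      then have "Ev n p \<epsilon> (\<epsilon>/12) S" using BEv S by blast
      then show ?thesis using eq le1 by simp
    qed
  qed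
  have tp: "Pr q (A - {i}) tame \<ge> 7/8" if "i \<in> A" for i
    using tame_prob[OF n tot e0 q k that[unfolded A_def]] unfolding tame_def A_def .
  have PB: "Pr q A (B i) \<ge> 7/8*q - q^2 * real (card G)" if iG: "i \<in> G" for i
  proof -
    have iA: "i \<in> A" using iG G unfolding A_def by auto
    have pw: "(of_bool (B i S) :: real) \<ge> of_bool (i \<in> S) * of_bool (tame (S - {i}))
        - (\<Sum>l\<in>G-{i}. of_bool (i \<in> S \<and> l \<in> S))" for S
    proof (cases "B i S")
      case True
      have "0 \<le> (\<Sum>l\<in>G-{i}. (of_bool (i \<in> S \<and> l \<in> S) :: real))" by (rule sum_nonneg) simp
      moreover have "(of_bool (i \<in> S) * of_bool (tame (S - {i})) :: real) \<le> 1" by simp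
      moreover have "(of_bool (B i S) :: real) = 1" using True by simp
      ultimately show ?thesis by linarith
    next
      case False
      show ?thesis
      proof (cases "i \<in> S \<and> tame (S - {i})")
        case True
        then obtain l where l: "l \<in> G - {i}" "l \<in> S" using False unfolding B_def by auto
        have "(of_bool (i \<in> S \<and> l \<in> S) :: real) \<le> (\<Sum>l\<in>G-{i}. of_bool (i \<in> S \<and> l \<in> S))"
          using l finG by (intro member_le_sum) auto
        then show ?thesis using True l False by simp
      next
        case F2: False
        have "0 \<le> (\<Sum>l\<in>G-{i}. (of_bool (i \<in> S \<and> l \<in> S) :: real))" by (rule sum_nonneg) simp
        then show ?thesis using F2 by auto
      qed
    qed
    have "Pr q A (B i) \<ge> Ex q A (\<lambda>S. of_bool (i \<in> S) * of_bool (tame (S - {i}))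
        - (\<Sum>l\<in>G-{i}. of_bool (i \<in> S \<and> l \<in> S)))"
      using q1 pw by (intro Ex_mono) auto
    also have "Ex q A (\<lambda>S. of_bool (i \<in> S) * of_bool (tame (S - {i}))
        - (\<Sum>l\<in>G-{i}. of_bool (i \<in> S \<and> l \<in> S)))
      = Ex q A (\<lambda>S. of_bool (i \<in> S) * of_bool (tame (S - {i})))
        - (\<Sum>l\<in>G-{i}. Pr q A (\<lambda>S. i \<in> S \<and> l \<in> S))"
      using finG by (simp only: Ex_diff Ex_sum finite_Diff)
    also have "Ex q A (\<lambda>S. of_bool (i \<in> S) * of_bool (tame (S - {i})))
       = q * Pr q (A - {i}) (\<lambda>T. tame (insert i T - {i}))"
      by (rule Ex_pick[OF finA iA])
    also have "Pr q (A - {i}) (\<lambda>T. tame (insert i T - {i})) = Pr q (A - {i}) tame"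
    proof (rule Ex_cong)
      fix T assume "T \<subseteq> A - {i}"
      then have "insert i T - {i} = T" by auto
      then show "of_bool (tame (insert i T - {i})) = (of_bool (tame T) :: real)" by simp
    qed
    also have "(\<Sum>l\<in>G-{i}. Pr q A (\<lambda>S. i \<in> S \<and> l \<in> S)) = (\<Sum>l\<in>G-{i}. q^2)"
      using G iA unfolding A_def by (intro sum.cong refl Pr_pair) auto
    also have "\<dots> = real (card (G - {i})) * q^2" by simp
    finally have "Pr q A (B i) \<ge> q * Pr q (A - {i}) tame - real (card (G - {i})) * q^2" .
    moreover have "q * Pr q (A - {i}) tame \<ge> q * (7/8)" using tp[OF iA] q by (intro mult_left_mono) auto
    moreover have "real (card (G - {i})) * q^2 \<le> real (card G) * q^2"
      using finG by (intro mult_right_mono) (auto simp: card_Diff_subset_Int)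
    ultimately show ?thesis by (simp add: algebra_simps)
  qed
  have "(\<Sum>i\<in>G. 7/8*q - q^2 * real (card G)) \<le> (\<Sum>i\<in>G. Pr q A (B i))"
    using PB by (intro sum_mono) auto
  also have "(\<Sum>i\<in>G. Pr q A (B i)) = Ex q A (\<lambda>S. \<Sum>i\<in>G. of_bool (B i S))"
    using finG by (rule Ex_sum[symmetric])
  also have "\<dots> \<le> Pr q A (Ev n p \<epsilon> (\<epsilon>/12))"
    using q1 pw1 by (intro Ex_mono) auto
  finally have "Pr q A (Ev n p \<epsilon> (\<epsilon>/12)) \<ge> real (card G) * (7/8*q - q^2 * real (card G))" by simp
  moreover have "real (card G) * (7/8*q - q^2 * real (card G)) \<ge> 3/8 * q * real (card G)"
  proof -
    have "real (card G) * (7/8*q - q^2 * real (card G)) = (q * real (card G)) * (7/8 - q * real (card G))"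
      by (simp add: algebra_simps power2_eq_square)
    also have "\<dots> \<ge> (q * real (card G)) * (3/8)" using qG q by (intro mult_left_mono) auto
    finally show ?thesis by simp
  qed
  ultimately show ?thesis unfolding A_def by linarith
qed



lemma paircore:
  fixes x y \<epsilon> M :: real
  assumes x: "\<epsilon>/4 \<le> x" "x \<le> M*\<epsilon>" and y: "y \<le> -\<epsilon>/4" "y \<ge> -1" and e: "0 < \<epsilon>" "\<epsilon> \<le> 1" and M: "M \<ge> 0"
  shows "2 + x + y > 0 \<and> \<bar>(1+x)/(2+x+y) - 1/2\<bar> \<ge> \<epsilon>/(4*(2+M))"
proof -
  have X: "2 + x + y > 0" using x y e by linarith
  have eq: "(1+x)/(2+x+y) - 1/2 = (x - y)/(2*(2+x+y))" using X by (simp add: field_simps)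
  have d: "2*(2+x+y) \<le> 2*(2+M)"
  proof -
    have "M*\<epsilon> \<le> M" using mult_left_mono[of \<epsilon> 1 M] M e by simp
    then have "x \<le> M" using x by linarith
    moreover have "y \<le> 0" using y e by linarith
    ultimately have "2 + x + y \<le> 2 + M" by linarith
    then show ?thesis by simp
  qed
  have "\<epsilon>/(4*(2+M)) = (\<epsilon>/2)/(2*(2+M))" by simp
  also have "\<dots> \<le> (x - y)/(2*(2+x+y))"
    using x y e X d by (intro frac_le) auto
  also have "\<dots> \<le> \<bar>(1+x)/(2+x+y) - 1/2\<bar>" unfolding eq by (rule abs_ge_self)
  finally show ?thesis using X by simp
qed

lemma pairEv:
  fixes p :: "nat \<Rightarrow> real"
  assumes n: "n \<ge> 1" and pn: "\<forall>l\<in>{1..n}. 0 \<le> p l" and a: "a \<in> {1..n}" and b: "b \<in> {1..n}"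
    and ea: "\<epsilon>/4 \<le> real n * p a - 1" "real n * p a - 1 \<le> M*\<epsilon>"
    and eb: "real n * p b - 1 \<le> -\<epsilon>/4" and e: "0 < \<epsilon>" "\<epsilon> \<le> 1" and M: "M \<ge> 0"
  shows "Ev n p \<epsilon> (\<epsilon>/(4*(2+M))) {a, b}"
proof -
  define x where "x = real n * p a - 1"
  define y where "y = real n * p b - 1"
  have ab: "a \<noteq> b" using ea eb e by auto
  have y1: "y \<ge> -1" using pn b n unfolding y_def by auto
  note c = paircore[OF ea[folded x_def] eb[folded y_def] y1 e M]
  have pa: "p a = (1 + x)/real n" and pb: "p b = (1 + y)/real n"
    using n unfolding x_def y_def by (simp_all add: field_simps)
  have m: "mass p {a,b} = (2 + x + y)/real n"
  proof -
    have "mass p {a,b} = (1 + x)/real n + (1 + y)/real n" unfolding mass_def using ab pa pb by simp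
    also have "\<dots> = ((1 + x) + (1 + y))/real n" by (rule add_divide_distrib[symmetric])
    finally show ?thesis by (simp add: algebra_simps)
  qed
  have mpos: "mass p {a,b} > 0" using m c n by simp
  have "cond p {a,b} a = ((1 + x)/real n) / ((2 + x + y)/real n)" unfolding cond_def m pa ..
  also have "\<dots> = (1 + x)/(2 + x + y)" using n by (intro divdiv) simp
  finally have "\<bar>cond p {a,b} a - 1 / real (card {a,b})\<bar> \<ge> \<epsilon>/(4*(2+M))" using c ab by simp
  then show ?thesis using Ev_intro[of "{a,b}" n a \<epsilon> p] a b mpos e by simp
qed

lemma Pairs:
  fixes p :: "nat \<Rightarrow> real"
  assumes n: "n \<ge> 1" and pn: "\<forall>l\<in>{1..n}. 0 \<le> p l" and e: "0 < \<epsilon>" "\<epsilon> \<le> 1" and M: "M \<ge> 0"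
    and q: "0 < q" "q * real n \<le> 1/2"
    and P: "P \<subseteq> {1..n}" "\<forall>a\<in>P. \<epsilon>/4 \<le> real n * p a - 1 \<and> real n * p a - 1 \<le> M*\<epsilon>"
    and N: "Q \<subseteq> {1..n}" "\<forall>b\<in>Q. real n * p b - 1 \<le> -\<epsilon>/4"
  shows "Pr q {1..n} (Ev n p \<epsilon> (\<epsilon>/(4*(2+M)))) \<ge> real (card P) * real (card Q) * q^2 / 2"
proof -
  define A where "A = {1..n}"
  define E where "E = Ev n p \<epsilon> (\<epsilon>/(4*(2+M)))"
  have finA: "finite A" unfolding A_def by simp
  have finP: "finite P" using P finite_subset by blast
  have finQ: "finite Q" using N finite_subset by blast
  have disj: "a \<noteq> b" if "a \<in> P" "b \<in> Q" for a b using that P N e by force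
  have q1: "0 \<le> q" "q \<le> 1"
  proof -
    have "q * 1 \<le> q * real n" using q n by (intro mult_left_mono) auto
    then show "0 \<le> q" "q \<le> 1" using q by linarith+
  qed
  have pw: "(of_bool (E S) :: real) \<ge> (\<Sum>x\<in>P \<times> Q. of_bool (S = {fst x, snd x}))" if S: "S \<subseteq> A" for S
  proof -
    have eq: "(\<Sum>x\<in>P \<times> Q. (of_bool (S = {fst x, snd x}) :: real)) = real (card ((P \<times> Q) \<inter> {x. S = {fst x, snd x}}))"
      using finP finQ by simp
    have le1: "card ((P \<times> Q) \<inter> {x. S = {fst x, snd x}}) \<le> Suc 0"
    proof (subst card_le_Suc0_iff_eq)
      show "finite ((P \<times> Q) \<inter> {x. S = {fst x, snd x}})" using finP finQ by simp
      show "\<forall>a1\<in>(P \<times> Q) \<inter> {x. S = {fst x, snd x}}. \<forall>a2\<in>(P \<times> Q) \<inter> {x. S = {fst x, snd x}}. a1 = a2"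
      proof (intro ballI)
        fix u v assume u: "u \<in> (P \<times> Q) \<inter> {x. S = {fst x, snd x}}" and v: "v \<in> (P \<times> Q) \<inter> {x. S = {fst x, snd x}}"
        then have "{fst u, snd u} = {fst v, snd v}" "fst u \<in> P" "snd u \<in> Q" "fst v \<in> P" "snd v \<in> Q" by auto
        moreover have "fst u \<noteq> snd v" using disj[of "fst u" "snd v"] calculation by simp
        moreover have "snd u \<noteq> fst v" using disj[of "fst v" "snd u"] calculation by auto
        ultimately have "fst u = fst v" "snd u = snd v" by (auto simp: doubleton_eq_iff)
        then show "u = v" by (simp add: prod_eq_iff)
      qed
    qed
    show ?thesis
    proof (cases "(P \<times> Q) \<inter> {x. S = {fst x, snd x}} = {}")
      case True then show ?thesis using eq by simp
    next
      case False
      then obtain w where w: "w \<in> (P \<times> Q) \<inter> {x. S = {fst x, snd x}}" by blast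
      obtain a b where ab: "a \<in> P" "b \<in> Q" "S = {a, b}" using w by auto
      have abn: "a \<in> {1..n}" "b \<in> {1..n}" using ab P N by auto
      have "E S" unfolding E_def ab(3)
        by (rule pairEv[OF n pn abn _ _ _ e M]) (use ab P N in auto)
      then show ?thesis using eq le1 by simp
    qed
  qed
  have W2: "W q A {a, b} \<ge> q^2 / 2" if "a \<in> P" "b \<in> Q" for a b
  proof -
    have ab: "a \<noteq> b" using disj that by simp
    have cA: "card A = n" unfolding A_def by simp
    have "1 + real (n - 2) * (- q) \<le> (1 + (- q)) ^ (n - 2)"
      using q1 by (intro Bernoulli_inequality) auto
    then have h1: "1 - real (n - 2) * q \<le> (1 - q) ^ (n - 2)" by simp
    have h2: "real (n - 2) * q \<le> real n * q" using q1 by (intro mult_right_mono) auto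
    have h3: "real n * q \<le> 1/2" using q(2) by (simp add: mult.commute)
    have "(1 - q) ^ (n - 2) \<ge> 1/2" using h1 h2 h3 by linarith
    then have "q^2 * (1 - q) ^ (n - 2) \<ge> q^2 * (1/2)" by (intro mult_left_mono) auto
    moreover have c2: "card {a,b} = 2" using ab by simp
    moreover have "W q A {a,b} = q^2 * (1-q)^(n-2)" unfolding W_def cA c2 ..
    ultimately show ?thesis by simp
  qed
  have "real (card P) * real (card Q) * q^2 / 2 = (\<Sum>x\<in>P \<times> Q. q^2 / 2)"
    by (simp add: card_cartesian_product)
  also have "\<dots> \<le> (\<Sum>x\<in>P \<times> Q. Pr q A (\<lambda>S. S = {fst x, snd x}))"
  proof (rule sum_mono)
    fix x assume x: "x \<in> P \<times> Q"
    then have "{fst x, snd x} \<subseteq> A" using P N unfolding A_def by auto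
    then show "q^2 / 2 \<le> Pr q A (\<lambda>S. S = {fst x, snd x})" using Pr_eq[OF finA] W2 x by auto
  qed
  also have "\<dots> = Ex q A (\<lambda>S. \<Sum>x\<in>P \<times> Q. of_bool (S = {fst x, snd x}))"
    using finP finQ by (intro Ex_sum[symmetric]) simp
  also have "\<dots> \<le> Pr q A E" using q1 pw by (intro Ex_mono) auto
  finally show ?thesis unfolding A_def E_def .
qed



lemma scale: fixes t :: real assumes "t \<ge> 1" shows "\<exists>j::nat. t \<le> 2^j \<and> 2^j < 2*t"
proof -
  obtain m where m: "t < 2^m" using real_arch_pow[of 2 t] by auto
  define j where "j = (LEAST j::nat. t \<le> 2^j)"
  have tj: "t \<le> 2^j" unfolding j_def by (rule LeastI[of _ m]) (use m in simp)
  show ?thesis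
  proof (cases j)
    case 0 then show ?thesis using tj assms by (intro exI[of _ j]) auto
  next
    case (Suc i)
    have "\<not> t \<le> 2^i"
    proof
      assume "t \<le> 2^i"
      then have "j \<le> i" unfolding j_def by (rule Least_le)
      then show False using Suc by simp
    qed
    then show ?thesis using tj Suc by (intro exI[of _ j]) auto
  qed
qed

lemma jJ: assumes n: "n \<ge> 2" and j: "(2::real)^j < real n ^ 2" shows "j \<le> nat \<lfloor>2 * log 2 (real n)\<rfloor>"
proof -
  have "log 2 ((2::real)^j) < log 2 (real n ^ 2)" using j n by (subst log_less_cancel_iff) auto
  then have "real j < 2 * log 2 (real n)" using n by (simp add: log_nat_power)
  then have "int j \<le> \<lfloor>2 * log 2 (real n)\<rfloor>" by (simp add: le_floor_iff)
  then show ?thesis by linarith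
qed

lemma Jbounds: assumes n: "n \<ge> 2"
  shows "nat \<lfloor>2 * log 2 (real n)\<rfloor> \<ge> 1" "real (nat \<lfloor>2 * log 2 (real n)\<rfloor>) \<le> 2 * log 2 (real n)"
proof -
  have "log 2 (real n) \<ge> log 2 2" using n by (subst log_le_cancel_iff) auto
  then have l: "2 * log 2 (real n) \<ge> 2" by simp
  then have "\<lfloor>2 * log 2 (real n)\<rfloor> \<ge> 2" by (simp add: le_floor_iff)
  then show "nat \<lfloor>2 * log 2 (real n)\<rfloor> \<ge> 1" by linarith
  have "real_of_int \<lfloor>2 * log 2 (real n)\<rfloor> \<le> 2 * log 2 (real n)" by (rule of_int_floor_le)
  then show "real (nat \<lfloor>2 * log 2 (real n)\<rfloor>) \<le> 2 * log 2 (real n)" using l by linarith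
qed

lemma summin: fixes a :: "nat \<Rightarrow> real"
  assumes "finite I" "\<And>j. j \<in> I \<Longrightarrow> a j \<ge> 0" "c \<ge> 0"
  shows "(\<Sum>j\<in>I. min (a j) c) \<ge> min (\<Sum>j\<in>I. a j) c"
proof (cases "\<exists>j\<in>I. a j \<ge> c")
  case True
  then obtain j where j: "j \<in> I" "a j \<ge> c" by auto
  have "c = min (a j) c" using j by simp
  also have "\<dots> \<le> (\<Sum>j\<in>I. min (a j) c)" using assms j by (intro member_le_sum) auto
  finally show ?thesis by linarith
next
  case False
  then have "(\<Sum>j\<in>I. min (a j) c) = (\<Sum>j\<in>I. a j)" by (intro sum.cong) auto
  then show ?thesis by linarith
qed

lemma Pr_mono: "0 \<le> q \<Longrightarrow> q \<le> 1 \<Longrightarrow> (\<And>S. S \<subseteq> A \<Longrightarrow> P S \<Longrightarrow> Q S) \<Longrightarrow> Pr q A P \<le> Pr q A Q"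
  by (intro Ex_mono) auto

lemma Pr_nonneg: "0 \<le> q \<Longrightarrow> q \<le> 1 \<Longrightarrow> 0 \<le> Pr q A P"
  by (intro Ex_nonneg) auto



lemma scale_i:
  fixes n :: nat and x \<epsilon> :: real
  assumes n: "n \<ge> 2" and e0: "0 < \<epsilon>" and xb: "8192*\<epsilon> \<le> x" and xt: "x \<le> 2*\<epsilon>*real n"
  shows "\<exists>j\<in>{1..nat \<lfloor>2 * log 2 (real n)\<rfloor>}. real n / 2^j \<ge> 32 \<and> 128*\<epsilon>*(real n / 2^j) \<le> x
            \<and> 1/2^j \<ge> x / (256*\<epsilon>*real n)"
proof -
  define y where "y = x / (128*\<epsilon>)"
  have y64: "y \<ge> 64" unfolding y_def using xb e0 by (simp add: field_simps)
  have yn: "y \<le> real n / 64" unfolding y_def using xt e0 by (simp add: field_simps)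
  have n0: "real n > 0" using n by simp
  define t where "t = real n / y"
  have ypos: "y > 0" using y64 by simp
  have t64: "t \<ge> 64" unfolding t_def using yn ypos by (simp add: field_simps)
  obtain j where j: "t \<le> 2^j" "2^j < 2*t" using scale[of t] t64 by auto
  have pj: "(2::real)^j > 0" by simp
  have k1: "real n / 2^j \<le> y"
  proof -
    have "real n / 2^j \<le> real n / t" using j(1) t64 n0 by (intro divide_left_mono) auto
    also have "real n / t = y" unfolding t_def using ypos n0 by simp
    finally show ?thesis .
  qed
  have k2: "real n / 2^j > y / 2"
  proof -
    have "real n / (2*t) < real n / 2^j" using j(2) n0 pj t64 by (intro divide_strict_left_mono) auto
    moreover have "real n / (2*t) = y / 2" unfolding t_def using ypos n0 by simp
    ultimately show ?thesis by simp
  qed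
  have q: "1/2^j > x / (256*\<epsilon>*real n)"
  proof -
    have "1/(2*t) < 1/2^j" using j(2) pj t64 by (intro divide_strict_left_mono) auto
    moreover have "1/(2*t) = x / (256*\<epsilon>*real n)" unfolding t_def y_def using e0 n0 by (simp add: field_simps)
    ultimately show ?thesis by simp
  qed
  have j1: "j \<ge> 1"
  proof (rule ccontr)
    assume "\<not> j \<ge> 1" then have "j = 0" by simp
    then show False using j(1) t64 by simp
  qed
  have "(2::real)^j < real n ^ 2"
  proof -
    have "2*t \<le> real n / 32" unfolding t_def using y64 n0 by (simp add: field_simps)
    also have "\<dots> \<le> real n ^ 2" using n by (simp add: power2_eq_square field_simps)
    finally show ?thesis using j(2) by simp
  qed
  then have jJ': "j \<le> nat \<lfloor>2 * log 2 (real n)\<rfloor>" using jJ n by blast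
  have "128*\<epsilon>*(real n / 2^j) \<le> 128*\<epsilon>*y" using k1 e0 by (intro mult_left_mono) auto
  also have "128*\<epsilon>*y = x" unfolding y_def using e0 by simp
  finally have c2: "128*\<epsilon>*(real n / 2^j) \<le> x" .
  have k32: "real n / 2^j \<ge> 32" using k2 y64 by linarith
  show ?thesis using j1 jJ' k32 c2 q by (intro bexI[of _ j]) auto
qed

definition Gj :: "nat \<Rightarrow> (nat \<Rightarrow> real) \<Rightarrow> real \<Rightarrow> nat \<Rightarrow> nat set" where
  "Gj n p \<epsilon> j = (if real n / 2^j \<ge> 32 then {i\<in>{1..n}. 128*\<epsilon>*(real n / 2^j) \<le> \<bar>real n * p i - 1\<bar>} else {})"

lemma perj:
  fixes p :: "nat \<Rightarrow> real"
  assumes n: "n \<ge> 2" and pn: "\<forall>l\<in>{1..n}. 0 \<le> p l"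
    and tot: "(\<Sum>l\<in>{1..n}. \<bar>real n * p l - 1\<bar>) = 2*\<epsilon>*n"
    and e0: "0 < \<epsilon>" and e1: "\<epsilon> \<le> 1" and j: "j \<ge> 1"
  shows "Pr (1/2^j) {1..n} (Ev n p \<epsilon> (\<epsilon>/12)) \<ge> 3/8 * min ((1/2^j) * real (card (Gj n p \<epsilon> j))) (1/2)"
proof -
  define q :: real where "q = 1/2^j"
  define k where "k = real n / 2^j"
  define G where "G = Gj n p \<epsilon> j"
  have n1: "n \<ge> 1" using n by simp
  have q0: "0 < q" unfolding q_def by simp
  have "(2::real)^1 \<le> 2^j" using j by (intro power_increasing) auto
  then have qh: "q \<le> 1/2" unfolding q_def by (simp add: field_simps)
  have q1: "0 \<le> q" "q \<le> 1" using q0 qh by auto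
  have kq: "k = q * real n" unfolding k_def q_def by simp
  show ?thesis
  proof (cases "k \<ge> 32")
    case False
    then have "G = {}" unfolding G_def Gj_def k_def by simp
    then show ?thesis using Pr_nonneg[OF q1] unfolding G_def q_def by simp
  next
    case True
    have GG: "G = {i\<in>{1..n}. 128*\<epsilon>*k \<le> \<bar>real n * p i - 1\<bar>}" unfolding G_def Gj_def k_def using True[unfolded k_def] by simp
    have Gsub: "G \<subseteq> {1..n}" and Gbig: "\<forall>i\<in>G. 128*\<epsilon>*k \<le> \<bar>real n * p i - 1\<bar>" unfolding GG by auto
    have finG: "finite G" using Gsub finite_subset by blast
    show ?thesis
    proof (cases "q * real (card G) \<le> 1/2")
      case True
      have "Pr q {1..n} (Ev n p \<epsilon> (\<epsilon>/12)) \<ge> 3/8 * q * real (card G)"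
        by (rule Mech[OF n1 pn tot e0 e1 q0 qh kq \<open>k \<ge> 32\<close> Gsub Gbig True])
      moreover have "3/8 * q * real (card G) \<ge> 3/8 * min (q * real (card G)) (1/2)" by simp
      ultimately show ?thesis unfolding q_def G_def by linarith
    next
      case False
      have pj: "(2::real)^j = 2 * 2^(j-1)" using j by (metis Suc_diff_1 less_le_trans not_one_le_zero not_less power_Suc zero_less_one)
      have "real (card G) > 2^(j-1)"
      proof -
        have "q * real (card G) > 1/2" using False by simp
        then have "real (card G) / 2^j > 1/2" unfolding q_def by simp
        then have "real (card G) > 2^j / 2" by (simp add: field_simps)
        then show ?thesis using pj by simp
      qed
      then have "2^(j-1) \<le> card G" by (metis less_imp_le of_nat_less_of_nat_power_cancel_iff numeral_2_eq_2 of_nat_le_iff of_nat_numeral)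
      then obtain G' where G': "G' \<subseteq> G" "card G' = 2^(j-1)" "finite G'" using obtain_subset_with_card_n by metis
      have qG': "q * real (card G') = 1/2" unfolding q_def G'(2) using pj by simp
      have "Pr q {1..n} (Ev n p \<epsilon> (\<epsilon>/12)) \<ge> 3/8 * q * real (card G')"
        by (rule Mech[OF n1 pn tot e0 e1 q0 qh kq \<open>k \<ge> 32\<close>]) (use G' Gsub Gbig qG' in auto)
      moreover have "3/8 * q * real (card G') = 3/8 * (1/2)" using qG' by simp
      moreover have "3/8 * (1/2) \<ge> 3/8 * min (q * real (card G)) (1/2)" by simp
      ultimately show ?thesis unfolding q_def G_def by linarith
    qed
  qed
qed

lemma caseA:
  fixes p :: "nat \<Rightarrow> real"
  assumes n: "n \<ge> 2" and pn: "\<forall>l\<in>{1..n}. 0 \<le> p l"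
    and tot: "(\<Sum>l\<in>{1..n}. \<bar>real n * p l - 1\<bar>) = 2*\<epsilon>*n"
    and e0: "0 < \<epsilon>" and e1: "\<epsilon> \<le> 1"
    and big: "(\<Sum>l\<in>{l\<in>{1..n}. 8192*\<epsilon> \<le> \<bar>real n * p l - 1\<bar>}. \<bar>real n * p l - 1\<bar>) \<ge> \<epsilon> * real n / 2"
  shows "(\<Sum>j\<in>{1..nat \<lfloor>2 * log 2 (real n)\<rfloor>}. Pr (1/2^j) {1..n} (Ev n p \<epsilon> (\<epsilon>/12))) \<ge> 3/4096"
proof -
  define J where "J = nat \<lfloor>2 * log 2 (real n)\<rfloor>"
  define a where "a = (\<lambda>j. (1/2^j) * real (card (Gj n p \<epsilon> j)))"
  define Bg where "Bg = {l\<in>{1..n}. 8192*\<epsilon> \<le> \<bar>real n * p l - 1\<bar>}"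
  define e where "e = (\<lambda>l. \<bar>real n * p l - 1\<bar>)"
  have n0: "real n > 0" using n by simp
  have Gsub: "Gj n p \<epsilon> j \<subseteq> {1..n}" for j unfolding Gj_def by auto
  have a0: "a j \<ge> 0" for j unfolding a_def by simp
  have "(\<Sum>j\<in>{1..J}. Pr (1/2^j) {1..n} (Ev n p \<epsilon> (\<epsilon>/12))) \<ge> (\<Sum>j\<in>{1..J}. 3/8 * min (a j) (1/2))"
    unfolding a_def using perj[OF n pn tot e0 e1] by (intro sum_mono) auto
  moreover have "(\<Sum>j\<in>{1..J}. 3/8 * min (a j) (1/2)) = 3/8 * (\<Sum>j\<in>{1..J}. min (a j) (1/2))"
    by (simp add: sum_distrib_left)
  moreover have "(\<Sum>j\<in>{1..J}. min (a j) (1/2)) \<ge> min (\<Sum>j\<in>{1..J}. a j) (1/2)"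
    using a0 by (intro summin) auto
  moreover have "(\<Sum>j\<in>{1..J}. a j) \<ge> 1/512"
  proof -
    have ca: "a j = (\<Sum>i\<in>{1..n}. (1/2^j) * of_bool (i \<in> Gj n p \<epsilon> j))" for j
    proof -
      have "(\<Sum>i\<in>{1..n}. (of_bool (i \<in> Gj n p \<epsilon> j) :: real)) = real (card ({1..n} \<inter> {i. i \<in> Gj n p \<epsilon> j}))"
        by simp
      also have "{1..n} \<inter> {i. i \<in> Gj n p \<epsilon> j} = Gj n p \<epsilon> j" using Gsub[of j] by auto
      finally have c: "(\<Sum>i\<in>{1..n}. (of_bool (i \<in> Gj n p \<epsilon> j) :: real)) = real (card (Gj n p \<epsilon> j))" .
      show ?thesis unfolding a_def sum_distrib_left[symmetric] c ..
    qed
    have "1/512 = (\<epsilon> * real n / 2) / (256*\<epsilon>*real n)" using e0 n0 by simp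
    also have "\<dots> \<le> (\<Sum>i\<in>Bg. e i) / (256*\<epsilon>*real n)"
      using big e0 n0 unfolding Bg_def e_def by (intro divide_right_mono) auto
    also have "\<dots> = (\<Sum>i\<in>Bg. e i / (256*\<epsilon>*real n))" by (simp add: sum_divide_distrib)
    also have "\<dots> = (\<Sum>i\<in>{1..n}. if i \<in> Bg then e i / (256*\<epsilon>*real n) else 0)"
    proof -
      have BgE: "{i\<in>{1..n}. i \<in> Bg} = Bg" unfolding Bg_def by auto
      show ?thesis using sum.inter_filter[of "{1..n}" "\<lambda>i. e i / (256*\<epsilon>*real n)" "\<lambda>i. i \<in> Bg"] BgE by simp
    qed
    also have "\<dots> \<le> (\<Sum>i\<in>{1..n}. \<Sum>j\<in>{1..J}. (1/2^j) * of_bool (i \<in> Gj n p \<epsilon> j))"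
    proof (rule sum_mono)
      fix i assume i: "i \<in> {1..n}"
      show "(if i \<in> Bg then e i / (256*\<epsilon>*real n) else 0) \<le> (\<Sum>j\<in>{1..J}. (1/2^j) * of_bool (i \<in> Gj n p \<epsilon> j))"
      proof (cases "i \<in> Bg")
        case False then show ?thesis by (simp add: sum_nonneg)
      next
        case True
        have xb: "8192*\<epsilon> \<le> e i" using True unfolding Bg_def e_def by simp
        have xt: "e i \<le> 2*\<epsilon>*real n" unfolding e_def tot[symmetric] using i by (intro member_le_sum) auto
        obtain j where j: "j \<in> {1..J}" "real n / 2^j \<ge> 32" "128*\<epsilon>*(real n / 2^j) \<le> e i"
            "1/2^j \<ge> e i / (256*\<epsilon>*real n)"
          using scale_i[OF n e0 xb xt] unfolding J_def by blast
        have iG: "i \<in> Gj n p \<epsilon> j" unfolding Gj_def using j(2,3) i unfolding e_def by simp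
        have "e i / (256*\<epsilon>*real n) \<le> (1/2^j) * of_bool (i \<in> Gj n p \<epsilon> j)" using iG j(4) by simp
        also have "\<dots> \<le> (\<Sum>j\<in>{1..J}. (1/2^j) * of_bool (i \<in> Gj n p \<epsilon> j))"
          using j(1) by (intro member_le_sum) auto
        finally show ?thesis using True by simp
      qed
    qed
    also have "\<dots> = (\<Sum>j\<in>{1..J}. \<Sum>i\<in>{1..n}. (1/2^j) * of_bool (i \<in> Gj n p \<epsilon> j))"
      by (rule sum.swap)
    also have "\<dots> = (\<Sum>j\<in>{1..J}. a j)" using ca by simp
    finally show ?thesis .
  qed
  ultimately show ?thesis unfolding J_def by linarith
qed



lemma count_le:
  fixes g h :: "nat \<Rightarrow> real"
  assumes A: "finite A" and le: "\<And>l. l \<in> A \<Longrightarrow> g l \<le> of_bool (l \<in> B) * h l + of_bool (l \<in> C) * M + d"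
    and B: "B \<subseteq> A" and C: "C \<subseteq> A"
  shows "(\<Sum>l\<in>A. g l) \<le> (\<Sum>l\<in>B. h l) + real (card C) * M + real (card A) * d"
proof -
  have "(\<Sum>l\<in>A. g l) \<le> (\<Sum>l\<in>A. of_bool (l \<in> B) * h l + of_bool (l \<in> C) * M + d)"
    using le by (rule sum_mono)
  also have "\<dots> = (\<Sum>l\<in>A. of_bool (l \<in> B) * h l) + (\<Sum>l\<in>A. of_bool (l \<in> C) * M) + (\<Sum>l\<in>A. d)"
    by (simp add: sum.distrib)
  also have "(\<Sum>l\<in>A. of_bool (l \<in> B) * h l) = (\<Sum>l\<in>B. h l)"
  proof -
    have "A \<inter> {x. x \<in> B} = B" using B by auto
    then show ?thesis using A by simp
  qed
  also have "(\<Sum>l\<in>A. of_bool (l \<in> C) * M) = real (card C) * M"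
  proof -
    have "A \<inter> {x. x \<in> C} = C" using C by auto
    then show ?thesis using A by (simp add: sum_distrib_right[symmetric])
  qed
  finally show ?thesis by simp
qed

lemma caseB:
  fixes p :: "nat \<Rightarrow> real"
  assumes n: "n \<ge> 4" and pn: "\<forall>l\<in>{1..n}. 0 \<le> p l"
    and tot: "(\<Sum>l\<in>{1..n}. \<bar>real n * p l - 1\<bar>) = 2*\<epsilon>*n"
    and s0: "(\<Sum>l\<in>{1..n}. real n * p l - 1) = 0"
    and e0: "0 < \<epsilon>" and e1: "\<epsilon> \<le> 1"
    and small: "(\<Sum>l\<in>{l\<in>{1..n}. 8192*\<epsilon> \<le> \<bar>real n * p l - 1\<bar>}. \<bar>real n * p l - 1\<bar>) < \<epsilon> * real n / 2"
  shows "(\<Sum>j\<in>{1..nat \<lfloor>2 * log 2 (real n)\<rfloor>}. Pr (1/2^j) {1..n} (Ev n p \<epsilon> (\<epsilon>/(4*(2+8192))))) \<ge> 1/2^35"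
proof -
  define J where "J = nat \<lfloor>2 * log 2 (real n)\<rfloor>"
  define e where "e = (\<lambda>l. real n * p l - 1)"
  define Bg where "Bg = {l\<in>{1..n}. 8192*\<epsilon> \<le> \<bar>e l\<bar>}"
  define P where "P = {l\<in>{1..n}. \<epsilon>/4 \<le> e l \<and> e l \<le> 8192*\<epsilon>}"
  define Q where "Q = {l\<in>{1..n}. e l \<le> -\<epsilon>/4 \<and> -(8192*\<epsilon>) \<le> e l}"
  have n0: "real n > 0" using n by simp
  have sm: "(\<Sum>l\<in>Bg. \<bar>e l\<bar>) < \<epsilon> * real n / 2" using small unfolding Bg_def e_def .
  have Bs: "Bg \<subseteq> {1..n}" "P \<subseteq> {1..n}" "Q \<subseteq> {1..n}" unfolding Bg_def P_def Q_def by auto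
  have tot': "(\<Sum>l\<in>{1..n}. \<bar>e l\<bar>) = 2*\<epsilon>*n" using tot unfolding e_def .
  have s0': "(\<Sum>l\<in>{1..n}. e l) = 0" using s0 unfolding e_def .
  have pos: "(\<Sum>l\<in>{1..n}. (\<bar>e l\<bar> + e l)/2) = \<epsilon> * n"
    using tot' s0' by (simp add: sum_divide_distrib[symmetric] sum.distrib)
  have neg: "(\<Sum>l\<in>{1..n}. (\<bar>e l\<bar> - e l)/2) = \<epsilon> * n"
    using tot' s0' by (simp add: sum_divide_distrib[symmetric] sum_subtractf)
  have cP: "real (card P) \<ge> real n / 32768"
  proof -
    have "(\<Sum>l\<in>{1..n}. (\<bar>e l\<bar> + e l)/2) \<le> (\<Sum>l\<in>Bg. \<bar>e l\<bar>) + real (card P) * (8192*\<epsilon>) + real (card {1..n}) * (\<epsilon>/4)"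
    proof (rule count_le[OF _ _ Bs(1) Bs(2)])
      fix l assume l: "l \<in> {1..n}"
      show "(\<bar>e l\<bar> + e l)/2 \<le> of_bool (l \<in> Bg) * \<bar>e l\<bar> + of_bool (l \<in> P) * (8192*\<epsilon>) + \<epsilon>/4"
      proof (cases "l \<in> Bg")
        case True then show ?thesis using e0 by (auto simp: of_bool_def)
      next
        case False
        then have lt: "\<bar>e l\<bar> < 8192*\<epsilon>" using l unfolding Bg_def by auto
        show ?thesis
        proof (cases "\<epsilon>/4 \<le> e l")
          case True
          then have "l \<in> P" using l lt unfolding P_def by auto
          then show ?thesis using False lt True by auto
        next
          case F2: False
          have "0 \<le> (of_bool (l \<in> P) :: real) * (8192*\<epsilon>)" using e0 by simp
          moreover have "(\<bar>e l\<bar> + e l)/2 \<le> \<epsilon>/4" using F2 e0 by (cases "e l \<ge> 0") auto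
          moreover have "(of_bool (l \<in> Bg) :: real) * \<bar>e l\<bar> = 0" using False by simp
          ultimately show ?thesis by linarith
        qed
      qed
    qed simp
    then have h: "\<epsilon> * real n \<le> (\<Sum>l\<in>Bg. \<bar>e l\<bar>) + real (card P) * (8192*\<epsilon>) + real n * (\<epsilon>/4)"
      using pos by simp
    have a1: "real (card P) * (8192*\<epsilon>) = 8192 * (\<epsilon> * real (card P))" by simp
    have a2: "real n * (\<epsilon>/4) = (\<epsilon> * real n)/4" by simp
    have a3: "\<epsilon> * (real n / 32768) = (\<epsilon> * real n) / 32768" by simp
    have "\<epsilon> * (real n / 32768) \<le> \<epsilon> * real (card P)" using h sm a1 a2 a3 by linarith
    then show ?thesis using e0 by simp
  qed
  have cQ: "real (card Q) \<ge> real n / 32768"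
  proof -
    have "(\<Sum>l\<in>{1..n}. (\<bar>e l\<bar> - e l)/2) \<le> (\<Sum>l\<in>Bg. \<bar>e l\<bar>) + real (card Q) * (8192*\<epsilon>) + real (card {1..n}) * (\<epsilon>/4)"
    proof (rule count_le[OF _ _ Bs(1) Bs(3)])
      fix l assume l: "l \<in> {1..n}"
      show "(\<bar>e l\<bar> - e l)/2 \<le> of_bool (l \<in> Bg) * \<bar>e l\<bar> + of_bool (l \<in> Q) * (8192*\<epsilon>) + \<epsilon>/4"
      proof (cases "l \<in> Bg")
        case True then show ?thesis using e0 by (auto simp: of_bool_def)
      next
        case False
        then have lt: "\<bar>e l\<bar> < 8192*\<epsilon>" using l unfolding Bg_def by auto
        show ?thesis
        proof (cases "e l \<le> -\<epsilon>/4")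
          case True
          then have "l \<in> Q" using l lt unfolding Q_def by auto
          then show ?thesis using False lt True by auto
        next
          case F2: False
          have "0 \<le> (of_bool (l \<in> Q) :: real) * (8192*\<epsilon>)" using e0 by simp
          moreover have "(\<bar>e l\<bar> - e l)/2 \<le> \<epsilon>/4" using F2 e0 by (cases "e l \<ge> 0") auto
          moreover have "(of_bool (l \<in> Bg) :: real) * \<bar>e l\<bar> = 0" using False by simp
          ultimately show ?thesis by linarith
        qed
      qed
    qed simp
    then have h: "\<epsilon> * real n \<le> (\<Sum>l\<in>Bg. \<bar>e l\<bar>) + real (card Q) * (8192*\<epsilon>) + real n * (\<epsilon>/4)"
      using neg by simp
    have a1: "real (card Q) * (8192*\<epsilon>) = 8192 * (\<epsilon> * real (card Q))" by simp
    have a2: "real n * (\<epsilon>/4) = (\<epsilon> * real n)/4" by simp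
    have a3: "\<epsilon> * (real n / 32768) = (\<epsilon> * real n) / 32768" by simp
    have "\<epsilon> * (real n / 32768) \<le> \<epsilon> * real (card Q)" using h sm a1 a2 a3 by linarith
    then show ?thesis using e0 by simp
  qed
  obtain j0 where j0: "2 * real n \<le> 2^j0" "2^j0 < 2 * (2 * real n)" using scale[of "2 * real n"] n by auto
  define q :: real where "q = 1/2^j0"
  have q0: "0 < q" unfolding q_def by simp
  have qn: "q * real n \<le> 1/2" unfolding q_def using j0(1) by (simp add: field_simps)
  have qge: "q \<ge> 1/(4*real n)" unfolding q_def using j0(2) n0 by (simp add: field_simps)
  have j01: "j0 \<in> {1..J}"
  proof -
    have "j0 \<noteq> 0" using j0(1) n by (intro notI) simp
    moreover have "(2::real)^j0 < real n ^ 2"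
    proof -
      have "4 * real n \<le> real n * real n" using n by (intro mult_right_mono) auto
      then show ?thesis using j0(2) by (simp add: power2_eq_square)
    qed
    then have "j0 \<le> J" unfolding J_def using n by (intro jJ) auto
    ultimately show ?thesis by simp
  qed
  have M0: "(8192::real) \<ge> 0" by simp
  have PP: "\<forall>a\<in>P. \<epsilon>/4 \<le> real n * p a - 1 \<and> real n * p a - 1 \<le> 8192*\<epsilon>" unfolding P_def e_def by auto
  have QQ: "\<forall>b\<in>Q. real n * p b - 1 \<le> -\<epsilon>/4" unfolding Q_def e_def by auto
  have n1: "n \<ge> 1" using n by simp
  have F: "Pr q {1..n} (Ev n p \<epsilon> (\<epsilon>/(4*(2+8192)))) \<ge> real (card P) * real (card Q) * q^2 / 2"
    by (rule Pairs[OF n1 pn e0 e1 M0 q0 qn Bs(2) PP Bs(3) QQ])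
  have "1/2^35 \<le> (real n / 32768) * (real n / 32768) * (1/(4*real n))^2 / 2"
    using n0 by (simp add: power2_eq_square field_simps)
  also have "\<dots> \<le> real (card P) * real (card Q) * q^2 / 2"
    using cP cQ qge n0 by (intro divide_right_mono mult_mono power_mono) auto
  also have "\<dots> \<le> Pr (1/2^j0) {1..n} (Ev n p \<epsilon> (\<epsilon>/(4*(2+8192))))" using F unfolding q_def .
  also have "\<dots> \<le> (\<Sum>j\<in>{1..J}. Pr (1/2^j) {1..n} (Ev n p \<epsilon> (\<epsilon>/(4*(2+8192)))))"
  proof (rule member_le_sum[OF j01])
    fix j assume "j \<in> {1..J} - {j0}"
    have "(0::real) \<le> 1/2^j" by simp
    moreover have "(1::real)/2^j \<le> 1" by simp
    ultimately show "0 \<le> Pr (1/2^j) {1..n} (Ev n p \<epsilon> (\<epsilon>/(4*(2+8192))))" by (rule Pr_nonneg)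
  qed simp
  finally show ?thesis unfolding J_def .
qed



lemma main_bound:
  fixes p :: "nat \<Rightarrow> real"
  assumes n: "n \<ge> 4" and e0: "0 < \<epsilon>" and e1: "\<epsilon> \<le> 1" and d: "is_dist n p" and tv: "dTV n p (unif n) = \<epsilon>"
  shows "rand_set_prob n (Ev n p \<epsilon> (1/65536 * \<epsilon>)) \<ge> (1/2^36) / log 2 (real n)"
proof -
  define J where "J = nat \<lfloor>2 * log 2 (real n)\<rfloor>"
  define F where "F = (\<lambda>j::nat. Pr (1/2^j) {1..n} (Ev n p \<epsilon> (1/65536 * \<epsilon>)))"
  have n2: "n \<ge> 2" and n1: "n \<ge> 1" using n by auto
  have n0: "real n > 0" using n by simp
  have pn: "\<forall>l\<in>{1..n}. 0 \<le> p l" and p1: "(\<Sum>l\<in>{1..n}. p l) = 1" using d unfolding is_dist_def by auto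
  have tot: "(\<Sum>l\<in>{1..n}. \<bar>real n * p l - 1\<bar>) = 2*\<epsilon>*n"
  proof -
    have "(\<Sum>l\<in>{1..n}. \<bar>real n * p l - 1\<bar>) = (\<Sum>l\<in>{1..n}. real n * \<bar>p l - unif n l\<bar>)"
    proof (rule sum.cong)
      fix l assume "l \<in> {1..n}"
      then have "unif n l = 1 / real n" unfolding unif_def by simp
      then have "real n * p l - 1 = real n * (p l - unif n l)" using n0 by (simp add: field_simps)
      then show "\<bar>real n * p l - 1\<bar> = real n * \<bar>p l - unif n l\<bar>" by (simp add: abs_mult)
    qed simp
    also have "\<dots> = real n * (\<Sum>l\<in>{1..n}. \<bar>p l - unif n l\<bar>)" by (simp add: sum_distrib_left)
    also have "(\<Sum>l\<in>{1..n}. \<bar>p l - unif n l\<bar>) = 2 * \<epsilon>" using tv unfolding dTV_def by simp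
    finally show ?thesis by simp
  qed
  have s0: "(\<Sum>l\<in>{1..n}. real n * p l - 1) = 0"
    using p1 by (simp add: sum_subtractf sum_distrib_left[symmetric])
  have Fnn: "F j \<ge> 0" for j unfolding F_def by (rule Pr_nonneg) auto
  have Fsum: "(\<Sum>j\<in>{1..J}. F j) \<ge> 1/2^35"
  proof (cases "(\<Sum>l\<in>{l\<in>{1..n}. 8192*\<epsilon> \<le> \<bar>real n * p l - 1\<bar>}. \<bar>real n * p l - 1\<bar>) \<ge> \<epsilon> * real n / 2")
    case True
    have "3/4096 \<le> (\<Sum>j\<in>{1..J}. Pr (1/2^j) {1..n} (Ev n p \<epsilon> (\<epsilon>/12)))"
      using caseA[OF n2 pn tot e0 e1 True] unfolding J_def .
    also have "\<dots> \<le> (\<Sum>j\<in>{1..J}. F j)" unfolding F_def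
    proof (rule sum_mono)
      fix j :: nat
      have "(0::real) \<le> 1/2^j" "(1::real)/2^j \<le> 1" by auto
      then show "Pr (1/2^j) {1..n} (Ev n p \<epsilon> (\<epsilon>/12)) \<le> Pr (1/2^j) {1..n} (Ev n p \<epsilon> (1/65536 * \<epsilon>))"
        by (rule Pr_mono) (erule Ev_mono, use e0 in simp)
    qed
    finally show ?thesis by simp
  next
    case False
    then have sm: "(\<Sum>l\<in>{l\<in>{1..n}. 8192*\<epsilon> \<le> \<bar>real n * p l - 1\<bar>}. \<bar>real n * p l - 1\<bar>) < \<epsilon> * real n / 2" by simp
    have "1/2^35 \<le> (\<Sum>j\<in>{1..J}. Pr (1/2^j) {1..n} (Ev n p \<epsilon> (\<epsilon>/(4*(2+8192)))))"
      using caseB[OF n pn tot s0 e0 e1 sm] unfolding J_def .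
    also have "\<dots> \<le> (\<Sum>j\<in>{1..J}. F j)" unfolding F_def
    proof (rule sum_mono)
      fix j :: nat
      have "(0::real) \<le> 1/2^j" "(1::real)/2^j \<le> 1" by auto
      then show "Pr (1/2^j) {1..n} (Ev n p \<epsilon> (\<epsilon>/(4*(2+8192)))) \<le> Pr (1/2^j) {1..n} (Ev n p \<epsilon> (1/65536 * \<epsilon>))"
        by (rule Pr_mono) (erule Ev_mono, use e0 in simp)
    qed
    finally show ?thesis .
  qed
  have J1: "J \<ge> 1" and J2: "real J \<le> 2 * log 2 (real n)" unfolding J_def using Jbounds[OF n2] by auto
  have lg: "log 2 (real n) > 0" using n by simp
  have "rand_set_prob n (Ev n p \<epsilon> (1/65536 * \<epsilon>)) = (1 / real J) * (\<Sum>j\<in>{1..J}. F j)"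
    unfolding rsp_eq J_def F_def Let_def ..
  also have "(1 / real J) * (\<Sum>j\<in>{1..J}. F j) \<ge> (1 / (2 * log 2 (real n))) * (1/2^35)"
    using J1 J2 Fsum lg by (intro mult_mono divide_left_mono) auto
  also have "(1 / (2 * log 2 (real n))) * (1/2^35) = (1/2^36) / log 2 (real n)" by simp
  finally show ?thesis by simp
qed

theorem lemma4p1:
  "\<exists>c1 c2::real. c1 > 0 \<and> c2 > 0 \<and> (\<exists>N::nat. \<forall>n\<ge>N. \<forall>\<epsilon>::real. 0 < \<epsilon> \<and> \<epsilon> \<le> 1 \<longrightarrow>
     (\<forall>p. is_dist n p \<and> dTV n p (unif n) = \<epsilon> \<longrightarrow>
       (let z = (\<lambda>i. (p i - unif n i) / \<epsilon>) in
        rand_set_prob n (\<lambda>S. mass p S > 0 \<and> (\<exists>i\<in>S.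
            \<bar>(unif n i + \<epsilon> * z i) / (mass (unif n) S + \<epsilon> * mass z S) - unif n i / mass (unif n) S\<bar> \<ge> c2 * \<epsilon>
          \<and> \<bar>cond p S i - 1 / real (card S)\<bar> \<ge> c2 * \<epsilon>))
        \<ge> c1 / log 2 (real n))))"
  apply (rule exI[of _ "1/2^36"], rule exI[of _ "1/65536"])
  apply (intro conjI)
    apply simp
   apply simp
  apply (rule exI[of _ 4])
  apply (intro allI impI)
  apply (unfold Let_def)
  apply (rule main_bound[unfolded Ev_def devA_def devB_def])
      apply auto
  done


end
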